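(* Let $v_1,v_2\in\mathbb{R}^n$, $p\geq 2$, $\delta>0$, and $$J=\int_0^1\int_0^1|v_1-(t-s\delta)v_2|^{p-2}\,ds\,dt.$$ Then there exist constants $C_p>0$ and $\delta_0>0$, both depending only on $p$, such that $$J\geq C_p\left(\max\{|v_1|,|v_2|\}\right)^{p-2}\qquad\text{for all }0<\delta\leq\delta_0.$$ *)

theory Defs
  imports "HOL-Analysis.Analysis"
begin

text \<open>Euclidean norm of the vector (v 0, ..., v (n-1)) in R^n, vectors represented
  as functions nat => real (only the first n components matter).\<close>
definition enorm :: "nat \<Rightarrow> (nat \<Rightarrow> real) \<Rightarrow> real" where
  "enorm n v = sqrt (\<Sum>i<n. (v i)\<^sup>2)"

text \<open>Real power x^a for x >= 0 with the usual convention x^0 = 1 (also for x = 0).\<close>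
definition rpow :: "real \<Rightarrow> real \<Rightarrow> real" where
  "rpow x a = (if a = 0 then 1 else x powr a)"

end

theory Submission
  imports Defs
begin

lemma enorm_nonneg: "0 \<le> enorm n v"
  by (simp add: enorm_def sum_nonneg)

lemma enorm_triangle: "enorm n (\<lambda>i. x i + y i) \<le> enorm n x + enorm n y"
  using L2_set_triangle_ineq[of x y "{..<n}"] by (simp add: enorm_def L2_set_def)

lemma enorm_scale: "enorm n (\<lambda>i. c * x i) = \<bar>c\<bar> * enorm n x"
  by (simp add: enorm_def power_mult_distrib real_sqrt_mult flip: sum_distrib_left)

lemma enorm_swap: "enorm n (\<lambda>i. a i - b i) = enorm n (\<lambda>i. b i - a i)"
  by (simp add: enorm_def power2_commute)

lemma keytau:
  fixes v1 v2 :: "nat \<Rightarrow> real" and n :: nat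
  defines "M \<equiv> max (enorm n v1) (enorm n v2)"
  shows "(\<forall>\<tau>\<in>{-1/8..1/4}. enorm n (\<lambda>i. v1 i - \<tau> * v2 i) \<ge> M/8) \<or>
         (\<forall>\<tau>\<in>{5/8..1}. enorm n (\<lambda>i. v1 i - \<tau> * v2 i) \<ge> M/8)"
proof (cases "\<forall>\<tau>\<in>{-1/8..1/4}. enorm n (\<lambda>i. v1 i - \<tau> * v2 i) \<ge> M/8")
  case True then show ?thesis by blast
next
  case False
  then obtain a where a: "a \<in> {-1/8..1/4}" "enorm n (\<lambda>i. v1 i - a * v2 i) < M/8" by auto
  have h1: "enorm n v1 \<le> enorm n (\<lambda>i. v1 i - a * v2 i) + \<bar>a\<bar> * enorm n v2"
    using enorm_triangle[of n "\<lambda>i. v1 i - a * v2 i" "\<lambda>i. a * v2 i"] by (simp add: enorm_scale)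
  have h1': "\<bar>a\<bar> * enorm n v2 \<le> 1/4 * enorm n v2"
    using a(1) by (intro mult_right_mono) (auto simp: enorm_nonneg)
  have "\<forall>\<tau>\<in>{5/8..1}. enorm n (\<lambda>i. v1 i - \<tau> * v2 i) \<ge> M/8"
  proof
    fix t :: real assume t: "t \<in> {5/8..1}"
    have eq: "(\<lambda>i. (v1 i - a * v2 i) + (-1) * (v1 i - t * v2 i)) = (\<lambda>i. (t - a) * v2 i)"
      by (auto simp: algebra_simps)
    have h2: "\<bar>t - a\<bar> * enorm n v2 \<le> enorm n (\<lambda>i. v1 i - a * v2 i) + enorm n (\<lambda>i. v1 i - t * v2 i)"
      using enorm_triangle[of n "\<lambda>i. v1 i - a * v2 i" "\<lambda>i. (-1) * (v1 i - t * v2 i)"]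
      unfolding eq by (simp add: enorm_scale enorm_swap[of n "\<lambda>i. t * v2 i"])
    have h2': "3/8 * enorm n v2 \<le> \<bar>t - a\<bar> * enorm n v2"
      using a(1) t by (intro mult_right_mono) (auto simp: enorm_nonneg)
    have "M = enorm n v1 \<or> M = enorm n v2" "M \<ge> enorm n v1" "M \<ge> enorm n v2"
        unfolding M_def by auto
    then show "enorm n (\<lambda>i. v1 i - t * v2 i) \<ge> M/8"
        using h1 h1' h2 h2' a(2) enorm_nonneg[of n v1] enorm_nonneg[of n v2]
          enorm_nonneg[of n "\<lambda>i. v1 i - t * v2 i"] by linarith
  qed
  then show ?thesis by blast
qed

lemma key:
  fixes v1 v2 :: "nat \<Rightarrow> real"
  assumes "0 < \<delta>" "\<delta> \<le> 1/8"
  shows "\<exists>a. {a..a+1/4} \<subseteq> {0..1} \<and> (\<forall>t\<in>{a..a+1/4}. \<forall>s\<in>{0..1}.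
     enorm n (\<lambda>i. v1 i - (t - s * \<delta>) * v2 i) \<ge> max (enorm n v1) (enorm n v2) / 8)"
proof -
  have sd: "0 \<le> s * \<delta> \<and> s * \<delta> \<le> 1/8" if "s \<in> {0..1}" for s
    using that assms mult_mono[of s 1 \<delta> "1/8"] by auto
  from keytau[of n v1 v2] show ?thesis
  proof
    assume H: "\<forall>\<tau>\<in>{-1/8..1/4}. enorm n (\<lambda>i. v1 i - \<tau> * v2 i) \<ge> max (enorm n v1) (enorm n v2)/8"
    show ?thesis
    proof (rule exI[of _ 0], intro conjI ballI)
      fix t s :: real assume "t \<in> {0..0+1/4}" "s \<in> {0..1}"
      then show "enorm n (\<lambda>i. v1 i - (t - s * \<delta>) * v2 i) \<ge> max (enorm n v1) (enorm n v2) / 8"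
        using H sd[of s] by auto
    qed auto
  next
    assume H: "\<forall>\<tau>\<in>{5/8..1}. enorm n (\<lambda>i. v1 i - \<tau> * v2 i) \<ge> max (enorm n v1) (enorm n v2)/8"
    show ?thesis
    proof (rule exI[of _ "3/4"], intro conjI ballI)
      fix t s :: real assume "t \<in> {3/4..3/4+1/4}" "s \<in> {0..1}"
      then show "enorm n (\<lambda>i. v1 i - (t - s * \<delta>) * v2 i) \<ge> max (enorm n v1) (enorm n v2) / 8"
        using H sd[of s] by auto
    qed auto
  qed
qed

theorem lemma3p2:
  fixes p :: real
  assumes "p \<ge> 2"
  shows "\<exists>C>0. \<exists>\<delta>0>0. \<forall>n::nat. \<forall>v1 v2 :: nat \<Rightarrow> real. \<forall>\<delta>::real.
           0 < \<delta> \<and> \<delta> \<le> \<delta>0 \<longrightarrow>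
           integral {0..1} (\<lambda>t. integral {0..1}
              (\<lambda>s. rpow (enorm n (\<lambda>i. v1 i - (t - s * \<delta>) * v2 i)) (p - 2)))
           \<ge> C * rpow (max (enorm n v1) (enorm n v2)) (p - 2)"
proof (cases "p = 2")
  case True
  show ?thesis
    by (rule exI[of _ "1/4"], simp, rule exI[of _ 1]) (simp add: rpow_def True)
next
  case False
  define q where "q = p - 2"
  have q: "q > 0" "q \<noteq> 0" using False assms q_def by auto
  have rp: "rpow x (p - 2) = x powr q" for x using q by (simp add: rpow_def q_def)
  show ?thesis
  proof (rule exI[of _ "1/4 * (1/8) powr q"], rule conjI, simp, rule exI[of _ "1/8"], rule conjI, simp, intro allI impI)
    fix n :: nat and v1 v2 :: "nat \<Rightarrow> real" and \<delta> :: real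
    assume d: "0 < \<delta> \<and> \<delta> \<le> 1/8"
    define M where "M = max (enorm n v1) (enorm n v2)"
    have M0: "0 \<le> M" using enorm_nonneg[of n v1] by (simp add: M_def)
    define F where "F = (\<lambda>t s. enorm n (\<lambda>i. v1 i - (t - s * \<delta>) * v2 i) powr q)"
    define g where "g = (\<lambda>t. integral {0..1} (F t))"
    have Fc: "continuous_on UNIV (\<lambda>(t, s). F t s)"
      unfolding F_def enorm_def case_prod_beta
      by (rule continuous_on_powr') (auto intro!: continuous_intros sum_nonneg q)
    have Fc1: "continuous_on UNIV (F t)" for t
      unfolding F_def enorm_def
      by (rule continuous_on_powr') (auto intro!: continuous_intros sum_nonneg q)
    have Fc2: "continuous_on {0..1} (F t)" for t
      using Fc1 continuous_on_subset by blast
    have gc: "continuous_on UNIV g"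
      unfolding g_def
      using integral_continuous_on_param[of UNIV 0 1 F] continuous_on_subset[OF Fc] by (simp add: cbox_interval)
    obtain a where a: "{a..a+1/4} \<subseteq> {0..1}"
      "\<And>t s. t \<in> {a..a+1/4} \<Longrightarrow> s \<in> {0..1} \<Longrightarrow> enorm n (\<lambda>i. v1 i - (t - s * \<delta>) * v2 i) \<ge> M / 8"
      using key[of \<delta> n v1 v2] d unfolding M_def by blast
    have a01: "0 \<le> a" "a + 1/4 \<le> 1" using a(1) by auto
    have gpos: "0 \<le> g t" for t
      unfolding g_def by (rule integral_nonneg[OF integrable_continuous_interval[OF Fc2]]) (simp add: F_def)
    have glow: "(M/8) powr q \<le> g t" if "t \<in> {a..a+1/4}" for t
    proof -
      have "integral {0..1} (\<lambda>s::real. (M/8) powr q) \<le> g t"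
        unfolding g_def
        by (rule integral_le[OF _ integrable_continuous_interval[OF Fc2]]) (auto intro!: powr_mono2 a(2)[OF that] simp: F_def M0 less_imp_le[OF q(1)])
      then show ?thesis by simp
    qed
    have "1/4 * (M/8) powr q = integral {a..a+1/4} (\<lambda>t. (M/8) powr q)" by simp
    also have "\<dots> \<le> integral {a..a+1/4} g"
      by (rule integral_le) (auto intro!: integrable_continuous_interval glow continuous_on_subset[OF gc])
    also have "\<dots> \<le> integral {0..1} g"
      by (rule integral_subset_le) (auto simp: a01 intro!: a(1) gpos integrable_continuous_interval continuous_on_subset[OF gc])
    finally have "1/4 * (M/8) powr q \<le> integral {0..1} g" .
    moreover have "(M/8) powr q = M powr q * (1/8) powr q"
      using M0 by (simp add: powr_divide powr_mult[symmetric])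
    ultimately show "1/4 * (1/8) powr q * rpow (max (enorm n v1) (enorm n v2)) (p - 2)
       \<le> integral {0..1} (\<lambda>t. integral {0..1} (\<lambda>s. rpow (enorm n (\<lambda>i. v1 i - (t - s * \<delta>) * v2 i)) (p - 2)))"
      by (simp add: rp g_def F_def M_def[symmetric] mult_ac)
  qed
qed

end
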